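(* Let $B=\bigoplus_{i\in\mathbb{Z}}\mathbb{Z}_2$ and $L_2=B\rtimes\mathbb{Z}$ the lamplighter group (with $\mathbb{Z}=\langle t\rangle$ acting by shifting indices), equipped with a word metric from a finite generating set. There exist quasi-isometries $\Psi:L_2\to L_2$ that coarsely permute the left cosets of $\langle t\rangle$ such that the induced permutation $\psi:B\to B$ is not a generalized affine map.
   Context: Elements of $L_2$ are written $((x_i),k)$ with $((x_i),k)((y_i),\ell)=((x_i+y_{i-k}),k+\ell)$ and $t=(0,1)$. A quasi-isometry $\Psi$ coarsely permutes the left cosets of $\langle t\rangle$ if there are a permutation $\sigma$ of these cosets and $C'\ge0$ with $d_{\mathcal H}(\Psi(g\langle t\rangle),\sigma(g\langle t\rangle))<C'$ for all $g$ ($d_{\mathcal H}$ = Hausdorff distance). The coset $((x_i),k)\langle t\rangle$ is identified with $(x_i)\in B$, giving the induced permutation $\psi$ of $B$. An affine map of $B$ is a map $x\mapsto\varphi(x)+c$ with $\varphi$ a group automorphism of $B$ and $c\in B$; a generalized affine map is a composition of an affine map with a shift $(x_i)\mapsto(x_{i+k})$, $k\in\mathbb{Z}$. *)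

theory Defs
  imports Main "HOL-Library.Extended_Nat"
begin

text \<open>An element (x_i) of B is represented by its (finite) support {i. x_i = 1}.\<close>

typedef B = "{X :: int set. finite X}" morphisms supp Abs_B
  by auto

definition B_zero :: B where
  "B_zero = Abs_B {}"

definition B_add :: "B \<Rightarrow> B \<Rightarrow> B" where
  "B_add x y = Abs_B ((supp x - supp y) \<union> (supp y - supp x))"

text \<open>shift k sends (y_i) to (y_{i-k}), i.e. the support is translated by +k.\<close>
definition B_shift :: "int \<Rightarrow> B \<Rightarrow> B" where
  "B_shift k y = Abs_B ((\<lambda>j. j + k) ` supp y)"

type_synonym L2 = "B \<times> int"

definition L_mult :: "L2 \<Rightarrow> L2 \<Rightarrow> L2" where
  "L_mult g h = (B_add (fst g) (B_shift (snd g) (fst h)), snd g + snd h)"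

definition L_one :: L2 where
  "L_one = (B_zero, 0)"

definition L_inv :: "L2 \<Rightarrow> L2" where
  "L_inv g = (B_shift (- snd g) (fst g), - snd g)"

definition L_t :: L2 where
  "L_t = (B_zero, 1)"

definition word_prod :: "L2 list \<Rightarrow> L2" where
  "word_prod ws = foldr L_mult ws L_one"

definition is_word :: "L2 set \<Rightarrow> L2 list \<Rightarrow> bool" where
  "is_word S ws \<longleftrightarrow> set ws \<subseteq> S \<union> L_inv ` S"

definition generates :: "L2 set \<Rightarrow> bool" where
  "generates S \<longleftrightarrow> (\<forall>g. \<exists>ws. is_word S ws \<and> word_prod ws = g)"

definition word_length :: "L2 set \<Rightarrow> L2 \<Rightarrow> nat" where
  "word_length S g = (LEAST n. \<exists>ws. is_word S ws \<and> length ws = n \<and> word_prod ws = g)"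

definition word_dist :: "L2 set \<Rightarrow> L2 \<Rightarrow> L2 \<Rightarrow> nat" where
  "word_dist S g h = word_length S (L_mult (L_inv g) h)"

definition quasi_isometry :: "L2 set \<Rightarrow> (L2 \<Rightarrow> L2) \<Rightarrow> bool" where
  "quasi_isometry S \<Psi> \<longleftrightarrow>
     (\<exists>K C :: real. K \<ge> 1 \<and> C \<ge> 0 \<and>
        (\<forall>g h. real (word_dist S g h) / K - C \<le> real (word_dist S (\<Psi> g) (\<Psi> h))
             \<and> real (word_dist S (\<Psi> g) (\<Psi> h)) \<le> K * real (word_dist S g h) + C)
      \<and> (\<forall>y. \<exists>g. real (word_dist S (\<Psi> g) y) \<le> C))"

definition hausdorff_dist :: "L2 set \<Rightarrow> L2 set \<Rightarrow> L2 set \<Rightarrow> enat" where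
  "hausdorff_dist S P Q =
     max (SUP p\<in>P. INF q\<in>Q. enat (word_dist S p q))
         (SUP q\<in>Q. INF p\<in>P. enat (word_dist S p q))"

text \<open>The left coset ((x_i),k)<t> = {((x_i), k+n) | n}, identified with (x_i) \<in> B.\<close>
definition t_coset :: "B \<Rightarrow> L2 set" where
  "t_coset x = {L_mult (x, 0) (B_zero, n) | n. True}"

definition induced_perm :: "L2 set \<Rightarrow> (L2 \<Rightarrow> L2) \<Rightarrow> (B \<Rightarrow> B) \<Rightarrow> bool" where
  "induced_perm S \<Psi> \<psi> \<longleftrightarrow> bij \<psi> \<and>
     (\<exists>C' :: nat. \<forall>x. hausdorff_dist S (\<Psi> ` t_coset x) (t_coset (\<psi> x)) < enat C')"

definition B_automorphism :: "(B \<Rightarrow> B) \<Rightarrow> bool" where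
  "B_automorphism \<phi> \<longleftrightarrow> bij \<phi> \<and> (\<forall>x y. \<phi> (B_add x y) = B_add (\<phi> x) (\<phi> y))"

definition affine_map :: "(B \<Rightarrow> B) \<Rightarrow> bool" where
  "affine_map f \<longleftrightarrow> (\<exists>\<phi> c. B_automorphism \<phi> \<and> f = (\<lambda>x. B_add (\<phi> x) c))"

text \<open>Shift (x_i) \<mapsto> (x_{i+k}) is B_shift (-k); composing with an affine map.\<close>
definition generalized_affine :: "(B \<Rightarrow> B) \<Rightarrow> bool" where
  "generalized_affine f \<longleftrightarrow> (\<exists>a k. affine_map a \<and> f = B_shift (- k) \<circ> a)"

end

theory Submission
  imports Defs
begin

lemma finite_supp[simp]: "finite (supp x)"
  using supp by auto

lemma supp_Abs[simp]: "finite A \<Longrightarrow> supp (Abs_B A) = A"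
  by (simp add: Abs_B_inverse)

lemma B_eq: "x = y \<longleftrightarrow> supp x = supp y"
  by (simp add: supp_inject)

lemma supp_zero[simp]: "supp B_zero = {}"
  by (simp add: B_zero_def)

lemma supp_add[simp]: "supp (B_add x y) = (supp x - supp y) \<union> (supp y - supp x)"
  by (simp add: B_add_def)

lemma transl_eq: "(\<lambda>j::int. j + k) ` A = {j. j - k \<in> A}"
  by (auto simp: image_iff) (metis diff_add_cancel)

lemma supp_shift[simp]: "supp (B_shift k y) = {j. j - k \<in> supp y}"
  unfolding B_shift_def by (simp add: transl_eq[symmetric])

definition E :: "int \<Rightarrow> L2" where "E q = (Abs_B {q}, 0)"

lemma L_mult_assoc: "L_mult (L_mult a b) c = L_mult a (L_mult b c)"
  by (simp add: L_mult_def B_eq algebra_simps) (auto simp: algebra_simps)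

lemma L_one_left[simp]: "L_mult L_one g = g"
  by (cases g) (simp add: L_mult_def L_one_def B_eq)

lemma L_one_right[simp]: "L_mult g L_one = g"
  by (cases g) (simp add: L_mult_def L_one_def B_eq)

lemma wp_Nil[simp]: "word_prod [] = L_one"
  by (simp add: word_prod_def)

lemma wp_Cons[simp]: "word_prod (s # w) = L_mult s (word_prod w)"
  by (simp add: word_prod_def)

lemma wp_append: "word_prod (u @ v) = L_mult (word_prod u) (word_prod v)"
  by (induction u) (auto simp: L_mult_assoc)

lemma is_word_append[simp]: "is_word S (u @ v) \<longleftrightarrow> is_word S u \<and> is_word S v"
  by (auto simp: is_word_def)

lemma is_word_Cons[simp]: "is_word S (s # v) \<longleftrightarrow> s \<in> S \<union> L_inv ` S \<and> is_word S v"
  by (auto simp: is_word_def)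

lemma wl_le: "is_word S ws \<Longrightarrow> word_prod ws = g \<Longrightarrow> word_length S g \<le> length ws"
  unfolding word_length_def by (rule Least_le) blast

lemma wl_ex: "generates S \<Longrightarrow> \<exists>ws. is_word S ws \<and> word_prod ws = g \<and> length ws = word_length S g"
proof -
  assume "generates S"
  then have "\<exists>n ws. is_word S ws \<and> length ws = n \<and> word_prod ws = g"
    unfolding generates_def by blast
  from LeastI_ex[OF this] show ?thesis unfolding word_length_def by blast
qed

lemma E_comm: "L_mult (b, j) (E (q - j)) = L_mult (E q) (b, j)"
  by (simp add: L_mult_def E_def B_eq) auto

lemma toggle_word:
  assumes R: "\<forall>s\<in>S \<union> L_inv ` S. \<forall>p\<in>supp (fst s). \<bar>p\<bar> \<le> R"
    and u: "\<forall>q. \<bar>q\<bar> \<le> R + 2 \<longrightarrow> is_word S (u q) \<and> word_prod (u q) = E q \<and> length (u q) \<le> M"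
  shows "is_word S ws \<Longrightarrow> p \<in> supp (fst (word_prod ws)) \<Longrightarrow> \<bar>q - p\<bar> \<le> 2 \<Longrightarrow>
     \<exists>ws'. is_word S ws' \<and> length ws' \<le> length ws + M \<and> word_prod ws' = L_mult (E q) (word_prod ws)"
proof (induction ws arbitrary: p q)
  case Nil
  then show ?case by (simp add: L_one_def)
next
  case (Cons s w)
  obtain b j where s: "s = (b, j)" by (cases s)
  obtain a j' where W: "word_prod w = (a, j')" by (cases "word_prod w")
  have hs: "s \<in> S \<union> L_inv ` S" and hw: "is_word S w" using Cons.prems by auto
  have "p \<in> supp b \<or> p - j \<in> supp a"
    using Cons.prems(2) by (auto simp: s W L_mult_def)
  then show ?case
  proof
    assume "p \<in> supp b"
    then have "\<bar>p\<bar> \<le> R" using R hs s by force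
    then have "\<bar>q\<bar> \<le> R + 2" using Cons.prems(3) by linarith
    then have uq: "is_word S (u q)" "word_prod (u q) = E q" "length (u q) \<le> M" using u by auto
    show ?thesis
      by (rule exI[of _ "u q @ s # w"]) (use uq Cons.prems(1) in \<open>auto simp: wp_append\<close>)
  next
    assume "p - j \<in> supp a"
    then have "p - j \<in> supp (fst (word_prod w))" by (simp add: W)
    moreover have "\<bar>(q - j) - (p - j)\<bar> \<le> 2" using Cons.prems(3) by simp
    ultimately obtain ws'' where h: "is_word S ws''" "length ws'' \<le> length w + M"
        "word_prod ws'' = L_mult (E (q - j)) (word_prod w)"
      using Cons.IH hw by blast
    have "word_prod (s # ws'') = L_mult (E q) (word_prod (s # w))"
      by (simp add: h(3) s flip: L_mult_assoc add: E_comm)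
    then show ?thesis using h hs by (intro exI[of _ "s # ws''"]) auto
  qed
qed


lemma wl_toggle:
  assumes R: "\<forall>s\<in>S \<union> L_inv ` S. \<forall>p\<in>supp (fst s). \<bar>p\<bar> \<le> R"
    and u: "\<forall>q. \<bar>q\<bar> \<le> R + 2 \<longrightarrow> is_word S (u q) \<and> word_prod (u q) = E q \<and> length (u q) \<le> M"
    and gen: "generates S" and p: "p \<in> supp c" and pq: "\<bar>q - p\<bar> \<le> 2"
    and c': "supp c' = ({q} - supp c) \<union> (supp c - {q})"
  shows "word_length S (c', j) \<le> word_length S (c, j) + M"
proof -
  obtain ws where ws: "is_word S ws" "word_prod ws = (c, j)" "length ws = word_length S (c, j)"
    using wl_ex[OF gen] by blast
  obtain ws' where ws': "is_word S ws'" "length ws' \<le> length ws + M"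
      "word_prod ws' = L_mult (E q) (word_prod ws)"
    using toggle_word[OF R u ws(1), of p q] p pq ws(2) by auto
  have "word_prod ws' = (c', j)"
    using ws'(3) ws(2) c' by (simp add: L_mult_def E_def B_eq) 
  then show ?thesis using wl_le[OF ws'(1)] ws'(2) ws(3) by fastforce
qed

lemma word_bound:
  assumes R: "\<forall>s\<in>S \<union> L_inv ` S. (\<forall>p\<in>supp (fst s). \<bar>p\<bar> \<le> R) \<and> \<bar>snd s\<bar> \<le> R"
    and R0: "R \<ge> 0"
  shows "is_word S ws \<Longrightarrow> (\<forall>p\<in>supp (fst (word_prod ws)). \<bar>p\<bar> \<le> R * int (length ws))
     \<and> \<bar>snd (word_prod ws)\<bar> \<le> R * int (length ws)"
proof (induction ws)
  case Nil
  then show ?case by (simp add: L_one_def)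
next
  case (Cons s w)
  obtain b j where s: "s = (b, j)" by (cases s)
  obtain a j' where W: "word_prod w = (a, j')" by (cases "word_prod w")
  have hs: "s \<in> S \<union> L_inv ` S" and hw: "is_word S w" using Cons.prems by auto
  have Rs: "\<forall>p\<in>supp b. \<bar>p\<bar> \<le> R" "\<bar>j\<bar> \<le> R"
  proof -
    have "(\<forall>p\<in>supp (fst s). \<bar>p\<bar> \<le> R) \<and> \<bar>snd s\<bar> \<le> R" using R hs by blast
    then show "\<forall>p\<in>supp b. \<bar>p\<bar> \<le> R" "\<bar>j\<bar> \<le> R" by (auto simp: s)
  qed
  have IH: "\<forall>p\<in>supp a. \<bar>p\<bar> \<le> R * int (length w)" "\<bar>j'\<bar> \<le> R * int (length w)"
    using Cons.IH hw W by auto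
  have e: "R * int (length (s # w)) = R + R * int (length w)" by (simp add: algebra_simps)
  have "\<forall>p\<in>supp (fst (word_prod (s # w))). \<bar>p\<bar> \<le> R * int (length (s # w))"
  proof
    fix p assume "p \<in> supp (fst (word_prod (s # w)))"
    then have "p \<in> supp b \<or> p - j \<in> supp a" by (auto simp: s W L_mult_def)
    then show "\<bar>p\<bar> \<le> R * int (length (s # w))"
    proof
      assume "p \<in> supp b" then show ?thesis using Rs R0 IH unfolding e
        by (smt (verit) mult_nonneg_nonneg of_nat_0_le_iff)
    next
      assume "p - j \<in> supp a" then have "\<bar>p - j\<bar> \<le> R * int (length w)" using IH by auto
      then show ?thesis using Rs unfolding e by linarith
    qed
  qed
  moreover have "\<bar>snd (word_prod (s # w))\<bar> \<le> R * int (length (s # w))"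
    using Rs IH unfolding e by (simp add: s W L_mult_def)
  ultimately show ?case by blast
qed

lemma dist_formula: "word_dist S (x, k) (y, m) = word_length S (B_shift (- k) (B_add x y), m - k)"
proof -
  have "L_mult (L_inv (x, k)) (y, m) = (B_shift (- k) (B_add x y), m - k)"
    by (simp add: L_mult_def L_inv_def B_eq) auto
  then show ?thesis by (simp add: word_dist_def)
qed

lemma dist_self: "word_dist S g g = 0"
proof -
  obtain x k where g: "g = (x, k)" by (cases g)
  have "(B_shift (- k) (B_add x x), k - k) = word_prod []"
    by (simp add: L_one_def B_eq)
  then show ?thesis using wl_le[of S "[]"] by (simp add: g dist_formula is_word_def)
qed

definition psi :: "B \<Rightarrow> B" where
  "psi x = (if 1 \<in> supp x \<and> 2 \<in> supp x then B_add x (Abs_B {0}) else x)"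

lemma supp_psi: "supp (psi x) = (if 1 \<in> supp x \<and> 2 \<in> supp x then (supp x - {0}) \<union> ({0} - supp x) else supp x)"
  by (simp add: psi_def)

lemma psi_psi[simp]: "psi (psi x) = x"
  by (simp add: B_eq supp_psi) auto

definition Psi :: "L2 \<Rightarrow> L2" where "Psi g = (psi (fst g), snd g)"

lemma Psi_Psi[simp]: "Psi (Psi g) = g"
  by (simp add: Psi_def)

lemma Psi_bound:
  assumes R: "\<forall>s\<in>S \<union> L_inv ` S. \<forall>p\<in>supp (fst s). \<bar>p\<bar> \<le> R"
    and u: "\<forall>q. \<bar>q\<bar> \<le> R + 2 \<longrightarrow> is_word S (u q) \<and> word_prod (u q) = E q \<and> length (u q) \<le> M"
    and gen: "generates S"
  shows "word_dist S (Psi g) (Psi h) \<le> word_dist S g h + M"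
proof -
  obtain x k where g: "g = (x, k)" by (cases g)
  obtain y m where h: "h = (y, m)" by (cases h)
  let ?P = "\<lambda>x. 1 \<in> supp x \<and> 2 \<in> supp x"
  let ?c = "B_shift (- k) (B_add x y)"
  let ?c' = "B_shift (- k) (B_add (psi x) (psi y))"
  show ?thesis
  proof (cases "?P x = ?P y")
    case True
    then have "?c' = ?c" by (auto simp: B_eq supp_psi)
    then show ?thesis by (simp add: g h Psi_def dist_formula)
  next
    case False
    then have c': "supp ?c' = ({-k} - supp ?c) \<union> (supp ?c - {-k})"
      by (cases "1 \<in> supp y \<and> 2 \<in> supp y"; cases "1 \<in> supp x \<and> 2 \<in> supp x") (auto simp: supp_psi)
    have "1 - k \<in> supp ?c \<or> 2 - k \<in> supp ?c" using False by auto
    then obtain p where p: "p \<in> supp ?c" "\<bar>-k - p\<bar> \<le> 2"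
    proof
      assume "1 - k \<in> supp ?c" then show ?thesis using that[of "1 - k"] by simp
    next
      assume "2 - k \<in> supp ?c" then show ?thesis using that[of "2 - k"] by simp
    qed
    show ?thesis
      using wl_toggle[OF R u gen p c'] by (simp add: g h Psi_def dist_formula)
  qed
qed

lemma t_coset_eq: "t_coset x = {(x, n) | n. True}"
proof -
  have "B_add x (B_shift 0 B_zero) = x" by (simp add: B_eq)
  then show ?thesis by (simp add: t_coset_def L_mult_def)
qed

lemma Psi_coset: "Psi ` t_coset x = t_coset (psi x)"
  by (auto simp: t_coset_eq Psi_def image_iff)

lemma gen_aff_prop:
  assumes "generalized_affine f"
  shows "B_add (f x) (f y) = B_add (f (B_add x y)) (f B_zero)"
proof -
  obtain a k where a: "affine_map a" and f: "f = B_shift (- k) \<circ> a"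
    using assms unfolding generalized_affine_def by blast
  obtain \<phi> c where \<phi>: "B_automorphism \<phi>" and ac: "a = (\<lambda>x. B_add (\<phi> x) c)"
    using a unfolding affine_map_def by blast
  have add: "\<And>x y. \<phi> (B_add x y) = B_add (\<phi> x) (\<phi> y)" using \<phi> unfolding B_automorphism_def by blast
  have "\<phi> B_zero = B_add (\<phi> B_zero) (\<phi> B_zero)"
    using add[of B_zero B_zero] by (simp add: B_add_def B_zero_def)
  then have z: "supp (\<phi> B_zero) = {}" by (simp add: B_eq)
  show ?thesis
    by (simp add: f ac add B_eq z) blast
qed

lemma psi_not_aff: "\<not> generalized_affine psi"
proof
  assume "generalized_affine psi"
  from gen_aff_prop[OF this, of "Abs_B {1}" "Abs_B {2}"]
  have "supp (B_add (psi (Abs_B {1})) (psi (Abs_B {2})))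
      = supp (B_add (psi (B_add (Abs_B {1}) (Abs_B {2}))) (psi B_zero))" by simp
  then have "{2::int,1} = {0,2,1}" by (simp add: supp_psi)
  then have "(0::int) \<in> {2,1}" by blast
  then show False by simp
qed

lemma finite_int_bound: "finite (U :: int set) \<Longrightarrow> \<exists>R\<ge>0. \<forall>u\<in>U. \<bar>u\<bar> \<le> R"
proof (induction U rule: finite_induct)
  case empty then show ?case by auto
next
  case (insert a U)
  then obtain R where "R \<ge> 0" "\<forall>u\<in>U. \<bar>u\<bar> \<le> R" by blast
  then show ?case by (intro exI[of _ "max R \<bar>a\<bar>"]) auto
qed

theorem theorem1p2:
  fixes S :: "L2 set"
  assumes "finite S" and "generates S"
  shows "\<exists>\<Psi>. quasi_isometry S \<Psi> \<and> (\<exists>\<psi>. induced_perm S \<Psi> \<psi>)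
              \<and> (\<forall>\<psi>. induced_perm S \<Psi> \<psi> \<longrightarrow> \<not> generalized_affine \<psi>)"
proof -
  let ?T = "S \<union> L_inv ` S"
  have fT: "finite ?T" using assms(1) by simp
  have "finite (\<Union>s\<in>?T. insert (snd s) (supp (fst s)))" using fT by simp
  then obtain R where R0: "R \<ge> 0" and Rb: "\<forall>v\<in>(\<Union>s\<in>?T. insert (snd s) (supp (fst s))). \<bar>v\<bar> \<le> R"
    using finite_int_bound by blast
  have R1: "\<forall>s\<in>?T. (\<forall>p\<in>supp (fst s). \<bar>p\<bar> \<le> R) \<and> \<bar>snd s\<bar> \<le> R" using Rb by blast
  have R2: "\<forall>s\<in>?T. \<forall>p\<in>supp (fst s). \<bar>p\<bar> \<le> R" using R1 by blast
  have "\<forall>q. \<exists>w. is_word S w \<and> word_prod w = E q" using assms(2) unfolding generates_def by blast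
  then obtain u where u0: "\<And>q. is_word S (u q) \<and> word_prod (u q) = E q" by metis
  define M where "M = Max ((\<lambda>q. length (u q)) ` {-(R+2)..R+2})"
  have u: "\<forall>q. \<bar>q\<bar> \<le> R + 2 \<longrightarrow> is_word S (u q) \<and> word_prod (u q) = E q \<and> length (u q) \<le> M"
    using u0 unfolding M_def by (auto intro!: Max_ge imageI)
  have bnd: "\<And>g h. word_dist S (Psi g) (Psi h) \<le> word_dist S g h + M"
    using Psi_bound[OF R2 u assms(2)] by blast
  have a: "\<forall>g h. real (word_dist S g h) / 1 - real M \<le> real (word_dist S (Psi g) (Psi h))
           \<and> real (word_dist S (Psi g) (Psi h)) \<le> 1 * real (word_dist S g h) + real M"
  proof (intro allI conjI)
    fix g h
    show "real (word_dist S g h) / 1 - real M \<le> real (word_dist S (Psi g) (Psi h))"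
      using bnd[of "Psi g" "Psi h"] by simp
    show "real (word_dist S (Psi g) (Psi h)) \<le> 1 * real (word_dist S g h) + real M"
      using bnd[of g h] by simp
  qed
  have b: "\<forall>y. \<exists>g. real (word_dist S (Psi g) y) \<le> real M"
  proof
    fix y show "\<exists>g. real (word_dist S (Psi g) y) \<le> real M"
      by (rule exI[of _ "Psi y"]) (simp add: dist_self)
  qed
  have qi: "quasi_isometry S Psi"
    unfolding quasi_isometry_def using a b by (intro exI[of _ 1] exI[of _ "real M"]) simp
  have bij: "bij psi" by (rule o_bij[of psi]) (auto simp: fun_eq_iff)
  have ip: "induced_perm S Psi psi"
    unfolding induced_perm_def
  proof (intro conjI bij exI[of _ 1] allI)
    fix x
    have "hausdorff_dist S (t_coset (psi x)) (t_coset (psi x)) \<le> 0"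
      unfolding hausdorff_dist_def
      by (intro max.boundedI SUP_least order.trans[OF INF_lower] ) (auto simp: dist_self zero_enat_def)
    then show "hausdorff_dist S (Psi ` t_coset x) (t_coset (psi x)) < enat 1"
      by (simp add: Psi_coset zero_enat_def) (meson enat_ord_simps(2) le_less_trans lessI)
  qed
  have uniq: "\<psi>' = psi" if ipp: "induced_perm S Psi \<psi>'" for \<psi>'
  proof
    fix x
    obtain C' :: nat where C': "hausdorff_dist S (t_coset (psi x)) (t_coset (\<psi>' x)) < enat C'"
      using ipp unfolding induced_perm_def by (metis Psi_coset)
    show "\<psi>' x = psi x"
    proof (rule ccontr)
      assume ne: "\<psi>' x \<noteq> psi x"
      let ?y = "psi x" and ?z = "\<psi>' x"
      obtain i where i: "i \<in> (supp ?y - supp ?z) \<union> (supp ?z - supp ?y)"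
        using ne by (auto simp: B_eq)
      define n where "n = i + R * int C' + 1"
      have "(SUP p\<in>t_coset ?y. INF q\<in>t_coset ?z. enat (word_dist S p q)) < enat C'"
        using C' unfolding hausdorff_dist_def by simp
      then have "(INF q\<in>t_coset ?z. enat (word_dist S (?y, n) q)) < enat C'"
        by (rule le_less_trans[rotated]) (rule SUP_upper, simp add: t_coset_eq)
      then obtain q where q: "q \<in> t_coset ?z" "enat (word_dist S (?y, n) q) < enat C'"
        by (auto simp: INF_less_iff)
      then obtain m where qm: "q = (?z, m)" by (auto simp: t_coset_eq)
      have dC: "word_dist S (?y, n) (?z, m) < C'" using q qm by simp
      obtain ws where ws: "is_word S ws" "word_prod ws = (B_shift (- n) (B_add ?y ?z), m - n)"
        "length ws = word_dist S (?y, n) (?z, m)"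
        using wl_ex[OF assms(2)] by (metis dist_formula)
      have "i - n \<in> supp (fst (word_prod ws))" using i ws(2) by auto
      then have "\<bar>i - n\<bar> \<le> R * int (length ws)" using word_bound[OF R1 R0 ws(1)] by blast
      moreover have "R * int (length ws) \<le> R * int C'"
        using dC ws(3) R0 by (intro mult_left_mono) auto
      ultimately show False unfolding n_def by linarith
    qed
  qed
  show ?thesis
    by (rule exI[of _ Psi]) (use qi ip uniq psi_not_aff in blast)
qed

end
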